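(* Let $\bm\Sigma=I_p$, $\sigma>0$, $n,\tilde n\ge1$, $1\le s\le p$, $b_0\ne0$, and let $\bm b\in\mathbb{R}^p$ satisfy $b_k\in\{-b_0,0,b_0\}$ for all $k$ and $\|\bm b\|_0=s$. Fix $1\le j\le p$ with $b_j\neq0$. Define $$\eta_j^{(os)}=\frac{\sqrt n b_j}{\Omega_{j,j}^{1/2}\sigma},\qquad \eta_j^{(ts)}=\frac{\sqrt n b_j}{\sqrt{(\Omega_{j,j}\bm b^{\intercal}\bm\Sigma\bm b+b_j^2)(1+n/\tilde n)+\Omega_{j,j}\sigma^2}},$$ with $\bm\Omega=\bm\Sigma^{-1}$. Then $|\eta_j^{(os)}|=\sqrt n|b_0|/\sigma$ and $$|\eta_j^{(ts)}|\le\min\Big\{\sqrt{\frac{n\wedge\tilde n}{s}},\ \frac{\sqrt n|b_0|}{\sigma}\Big\}.$$ Consequently the one-sample and two-sample powers $\Phi(|\eta|-\tau_\alpha)+\Phi(-|\eta|-\tau_\alpha)$ (with $\eta=\eta_j^{(os)}$, resp. $\eta_j^{(ts)}$) are given by these values.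
   Context: $\Phi$ is the standard normal CDF, $\tau_\alpha$ the $\alpha$-quantile of the standard normal, $a\wedge b=\min\{a,b\}$. The quantities $\eta_j^{(os)},\eta_j^{(ts)}$ are the signal strengths (means of the asymptotic $\sqrt n$-scaled $z$-statistics) for testing $\beta_j=0$ with one-sample data and with proxy data, respectively, when the true coefficient is $\bm b$. *)

theory Defs
  imports "HOL-Analysis.Analysis" "HOL-Probability.Probability"
begin

definition Phi :: "real \<Rightarrow> real" where
  "Phi x = measure (density lborel std_normal_density) {..x}"

definition tau :: "real \<Rightarrow> real" where
  "tau \<alpha> = (THE t. Phi t = \<alpha>)"

definition power :: "real \<Rightarrow> real \<Rightarrow> real" where
  "power \<eta> \<alpha> = Phi (\<bar>\<eta>\<bar> - tau \<alpha>) + Phi (- \<bar>\<eta>\<bar> - tau \<alpha>)"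

definition eta_os :: "nat \<Rightarrow> real \<Rightarrow> real^'p^'p \<Rightarrow> real^'p \<Rightarrow> 'p \<Rightarrow> real" where
  "eta_os n \<sigma> \<Omega> b j = sqrt (real n) * b$j / (sqrt (\<Omega>$j$j) * \<sigma>)"

definition eta_ts :: "nat \<Rightarrow> nat \<Rightarrow> real \<Rightarrow> real^'p^'p \<Rightarrow> real^'p^'p \<Rightarrow> real^'p \<Rightarrow> 'p \<Rightarrow> real" where
  "eta_ts n nt \<sigma> \<Sigma> \<Omega> b j =
     sqrt (real n) * b$j /
     sqrt ((\<Omega>$j$j * (b \<bullet> (\<Sigma> *v b)) + (b$j)\<^sup>2) * (1 + real n / real nt) + \<Omega>$j$j * \<sigma>\<^sup>2)"

end

theory Submission
  imports Defs
begin

lemma inv_id: "matrix_inv (mat 1 :: real^'p^'p) = mat 1"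
proof -
  have "\<exists>A'. (mat 1 :: real^'p^'p) ** A' = mat 1 \<and> A' ** mat 1 = mat 1"
    by (rule exI[of _ "mat 1"]) (simp add: matrix_mul_lid)
  then have "(mat 1 :: real^'p^'p) ** matrix_inv (mat 1) = mat 1"
    unfolding matrix_inv_def by (rule someI_ex[THEN conjunct1])
  then show ?thesis by (simp add: matrix_mul_lid)
qed

lemma key_ineq:
  fixes x s m n nt c sg :: real
  assumes "x > 0" "s \<ge> 1" "n \<ge> 1" "nt \<ge> 1" "sg > 0"
  shows "n * x / ((s * x + x) * (1 + n / nt) + sg) \<le> min n nt / s"
proof -
  have D: "(s * x + x) * (1 + n / nt) + sg \<ge> s * x * (1 + n/nt)"
    using assms by (simp add: field_simps)
  have Dp: "s * x * (1 + n/nt) > 0" using assms by (intro mult_pos_pos add_pos_nonneg) auto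
  have "n * x / ((s * x + x) * (1 + n / nt) + sg) \<le> n * x / (s * x * (1 + n/nt))"
    using D Dp assms by (intro divide_left_mono) auto
  also have "\<dots> = (n * nt * x) / ((s * (nt + n)) * x)"
    using assms by (simp add: field_simps)
  also have "\<dots> = n * nt / (s * (nt + n))"
    using assms by (intro nonzero_mult_divide_mult_cancel_right) auto
  also have "\<dots> \<le> min n nt / s"
  proof -
    have "n * nt / (nt + n) \<le> min n nt"
      using assms by (auto simp: field_simps min_def)
    then have "n * nt / (nt + n) / s \<le> min n nt / s"
      using assms by (intro divide_right_mono) auto
    moreover have "n * nt / (nt + n) / s = n * nt / (s * (nt + n))"
      by (simp add: mult.commute)
    ultimately show ?thesis by (simp add: mult.commute)
  qed
  finally show ?thesis .
qed

theorem corollary1: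
  fixes \<Sigma> \<Omega> :: "real^'p^'p" and b :: "real^'p" and \<sigma> b0 \<alpha> :: real
    and n nt s :: nat and j :: 'p
  assumes "\<Sigma> = mat 1" and "\<Omega> = matrix_inv \<Sigma>"
    and "\<sigma> > 0" and "n \<ge> 1" and "nt \<ge> 1"
    and "1 \<le> s" and "s \<le> CARD('p)"
    and "b0 \<noteq> 0"
    and "\<forall>k. b$k \<in> {-b0, 0, b0}"
    and "card {k. b$k \<noteq> 0} = s"
    and "b$j \<noteq> 0"
    and "0 < \<alpha>" and "\<alpha> < 1"
  shows "\<bar>eta_os n \<sigma> \<Omega> b j\<bar> = sqrt (real n) * \<bar>b0\<bar> / \<sigma>
    \<and> \<bar>eta_ts n nt \<sigma> \<Sigma> \<Omega> b j\<bar>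
        \<le> min (sqrt (real (min n nt) / real s)) (sqrt (real n) * \<bar>b0\<bar> / \<sigma>)
    \<and> power (eta_os n \<sigma> \<Omega> b j) \<alpha>
        = Phi (sqrt (real n) * \<bar>b0\<bar> / \<sigma> - tau \<alpha>) + Phi (- (sqrt (real n) * \<bar>b0\<bar> / \<sigma>) - tau \<alpha>)"
proof -
  have Om: "\<Omega> $ j $ j = 1" proof -
    have "\<Omega> = mat 1" using assms(1,2) inv_id by simp
    then show ?thesis by (simp add: mat_def)
  qed
  have bj: "(b$j)\<^sup>2 = b0\<^sup>2" "\<bar>b$j\<bar> = \<bar>b0\<bar>" using assms(9,11) by (metis empty_iff insert_iff power2_minus abs_minus_cancel)+
  have sq: "\<And>k. (b$k)\<^sup>2 = (if b$k \<noteq> 0 then b0\<^sup>2 else 0)"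
    using assms(9) by (metis empty_iff insert_iff power2_minus power_zero_numeral)
  have "b \<bullet> (\<Sigma> *v b) = (\<Sum>k\<in>UNIV. (b$k)\<^sup>2)"
    using assms(1) by (simp add: inner_vec_def power2_eq_square)
  also have "\<dots> = (\<Sum>k\<in>UNIV. if b$k \<noteq> 0 then b0\<^sup>2 else 0)" using sq by simp
  also have "\<dots> = real s * b0\<^sup>2" using assms(10) by (simp add: sum.If_cases)
  finally have bb: "b \<bullet> (\<Sigma> *v b) = real s * b0\<^sup>2" .
  have os: "\<bar>eta_os n \<sigma> \<Omega> b j\<bar> = sqrt (real n) * \<bar>b0\<bar> / \<sigma>"
    unfolding eta_os_def Om using assms(3) bj by (simp add: abs_mult)
  define D where "D = (real s * b0\<^sup>2 + b0\<^sup>2) * (1 + real n / real nt) + \<sigma>\<^sup>2"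
  have ts: "eta_ts n nt \<sigma> \<Sigma> \<Omega> b j = sqrt (real n) * b$j / sqrt D"
    unfolding eta_ts_def Om bb bj D_def by simp
  have Dpos: "D > 0" unfolding D_def using assms(3) by (intro add_nonneg_pos) auto
  have Dge: "D \<ge> \<sigma>\<^sup>2" unfolding D_def by simp
  have abs_ts: "\<bar>eta_ts n nt \<sigma> \<Sigma> \<Omega> b j\<bar> = sqrt (real n * b0\<^sup>2 / D)"
    unfolding ts using bj Dpos by (simp add: abs_mult real_sqrt_mult real_sqrt_divide)
  have b0p: "b0\<^sup>2 > 0" using assms(8) by simp
  have "real n * b0\<^sup>2 / D \<le> real (min n nt) / real s"
    using key_ineq[OF b0p, of "real s" "real n" "real nt" "\<sigma>\<^sup>2"] assms(3-6)
    unfolding D_def by simp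
  then have t1: "sqrt (real n * b0\<^sup>2 / D) \<le> sqrt (real (min n nt) / real s)"
    by simp
  have "real n * b0\<^sup>2 / D \<le> real n * b0\<^sup>2 / \<sigma>\<^sup>2"
    using Dge Dpos assms(3) by (intro divide_left_mono) auto
  then have "sqrt (real n * b0\<^sup>2 / D) \<le> sqrt (real n * b0\<^sup>2 / \<sigma>\<^sup>2)" by simp
  also have "\<dots> = sqrt (real n) * \<bar>b0\<bar> / \<sigma>"
    using assms(3) by (simp add: real_sqrt_mult real_sqrt_divide)
  finally have t2: "sqrt (real n * b0\<^sup>2 / D) \<le> sqrt (real n) * \<bar>b0\<bar> / \<sigma>" .
  show ?thesis using os abs_ts t1 t2 by (simp add: power_def)
qed

end
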